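(* The circuit graph $G_X(\mathcal{A})$ is a closed subset of $\mathbb{R}^{\mathcal{A}}\times\mathbb{R}$.
   Context: $X\subset\mathbb{R}^n$ is a nonempty closed convex set and $\mathcal{A}\subset\mathbb{R}^n$ is a nonempty finite set such that the functions $x\mapsto\exp(\alpha^Tx)$, $\alpha\in\mathcal{A}$, are linearly independent on $X$. $\mathbb{R}^{\mathcal{A}}$ denotes real vectors indexed by $\mathcal{A}$. $\mathcal{A}\nu=\sum_\alpha\alpha\nu_\alpha$. $\sigma_X(y)=\sup\{y^Tx:x\in X\}$. $N_\beta=\{\nu\in\mathbb{R}^{\mathcal{A}}:\nu_\alpha\ge0\ \forall\alpha\neq\beta,\ \sum_\alpha\nu_\alpha=0\}$. A vector $\nu^\star\in N_\beta$ is an $X$-circuit of $\mathcal{A}$ if (1) $\nu^\star\neq0$, (2) $\sigma_X(-\mathcal{A}\nu^\star)<\infty$, and (3) $\nu^\star$ cannot be written as a convex combination of two non-proportional vectors $\nu^{(1)},\nu^{(2)}\in N_\beta$ such that the map $\nu\mapsto\sigma_X(-\mathcal{A}\nu)$ is affine on the segment $[\nu^{(1)},\nu^{(2)}]$. $\Lambda_X(\mathcal{A})$ is the set of all $X$-circuits $\lambda$ (over all $\beta\in\mathcal{A}$) normalized so that the unique negative entry equals $-1$. The functional form of $\lambda\in\Lambda_X(\mathcal{A})$ is $\phi_\lambda=(\lambda,\sigma_X(-\mathcal{A}\lambda))\in\mathbb{R}^{\mathcal{A}}\times\mathbb{R}$. The circuit graph is $G_X(\mathcal{A})=\operatorname{cone}(\{\phi_\lambda:\lambda\in\Lambda_X(\mathcal{A})\}\cup\{(0,1)\})\subset\mathbb{R}^{\mathcal{A}}\times\mathbb{R}$.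 *)

theory Defs
  imports "HOL-Analysis.Analysis"
begin

text \<open>The finite exponent set A is encoded as an injective indexing
  alpha :: 'm \<Rightarrow> real^'n (A = range alpha), so R^A is real^'m.\<close>

definition Amap :: "('m::finite \<Rightarrow> real^'n) \<Rightarrow> real^'m \<Rightarrow> real^'n" where
  "Amap alpha \<nu> = (\<Sum>i\<in>UNIV. (\<nu> $ i) *\<^sub>R alpha i)"

definition supp_fun :: "(real^'n) set \<Rightarrow> real^'n \<Rightarrow> ereal" where
  "supp_fun X y = (SUP x\<in>X. ereal (y \<bullet> x))"

definition Nset :: "'m::finite \<Rightarrow> (real^'m) set" where
  "Nset \<beta> = {\<nu>. (\<forall>i. i \<noteq> \<beta> \<longrightarrow> \<nu> $ i \<ge> 0) \<and> (\<Sum>i\<in>UNIV. \<nu> $ i) = 0}"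

definition sfun :: "(real^'n) set \<Rightarrow> ('m::finite \<Rightarrow> real^'n) \<Rightarrow> real^'m \<Rightarrow> ereal" where
  "sfun X alpha \<nu> = supp_fun X (- Amap alpha \<nu>)"

definition affine_on_seg :: "(real^'n) set \<Rightarrow> ('m::finite \<Rightarrow> real^'n) \<Rightarrow> real^'m \<Rightarrow> real^'m \<Rightarrow> bool" where
  "affine_on_seg X alpha \<nu>1 \<nu>2 \<longleftrightarrow>
     sfun X alpha \<nu>1 < \<infinity> \<and> sfun X alpha \<nu>2 < \<infinity> \<and>
     (\<forall>t\<in>{0..1::real}. sfun X alpha ((1 - t) *\<^sub>R \<nu>1 + t *\<^sub>R \<nu>2)
        = ereal ((1 - t) * real_of_ereal (sfun X alpha \<nu>1) + t * real_of_ereal (sfun X alpha \<nu>2)))"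

definition proportional :: "real^'m \<Rightarrow> real^'m \<Rightarrow> bool" where
  "proportional u v \<longleftrightarrow> (\<exists>c. u = c *\<^sub>R v) \<or> (\<exists>c. v = c *\<^sub>R u)"

definition is_X_circuit :: "(real^'n) set \<Rightarrow> ('m::finite \<Rightarrow> real^'n) \<Rightarrow> 'm \<Rightarrow> real^'m \<Rightarrow> bool" where
  "is_X_circuit X alpha \<beta> \<nu> \<longleftrightarrow>
     \<nu> \<in> Nset \<beta> \<and> \<nu> \<noteq> 0 \<and> sfun X alpha \<nu> < \<infinity> \<and>
     \<not> (\<exists>\<nu>1 \<nu>2 t. \<nu>1 \<in> Nset \<beta> \<and> \<nu>2 \<in> Nset \<beta> \<and> \<not> proportional \<nu>1 \<nu>2 \<and>
           t \<in> {0<..<1::real} \<and> \<nu> = (1 - t) *\<^sub>R \<nu>1 + t *\<^sub>R \<nu>2 \<and>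
           affine_on_seg X alpha \<nu>1 \<nu>2)"

text \<open>normalized circuits: the unique negative entry (at beta) equals -1\<close>
definition Lambda :: "(real^'n) set \<Rightarrow> ('m::finite \<Rightarrow> real^'n) \<Rightarrow> (real^'m) set" where
  "Lambda X alpha = {l. \<exists>\<beta>. is_X_circuit X alpha \<beta> l \<and> l $ \<beta> = -1}"

definition funform :: "(real^'n) set \<Rightarrow> ('m::finite \<Rightarrow> real^'n) \<Rightarrow> real^'m \<Rightarrow> (real^'m) \<times> real" where
  "funform X alpha l = (l, real_of_ereal (sfun X alpha l))"

definition circuit_graph :: "(real^'n) set \<Rightarrow> ('m::finite \<Rightarrow> real^'n) \<Rightarrow> ((real^'m) \<times> real) set" where
  "circuit_graph X alpha = convex_cone hull (funform X alpha ` Lambda X alpha \<union> {(0, 1)})"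

end

theory Submission
  imports Defs
begin


lemma Amap_add: "Amap alpha (x + y) = Amap alpha x + Amap alpha y"
  by (simp add: Amap_def scaleR_add_left sum.distrib)
lemma Amap_scale: "Amap alpha (c *\<^sub>R x) = c *\<^sub>R Amap alpha x"
  by (simp add: Amap_def scaleR_sum_right)
lemma Amap_zero [simp]: "Amap alpha 0 = 0"
  by (simp add: Amap_def)
lemma Amap_inner: "Amap alpha \<nu> \<bullet> y = (\<Sum>i\<in>UNIV. \<nu> $ i * (alpha i \<bullet> y))"
  by (simp add: Amap_def inner_sum_left)

lemma sfun_le_iff: "sfun X alpha \<nu> \<le> ereal \<tau> \<longleftrightarrow> (\<forall>x\<in>X. - (Amap alpha \<nu> \<bullet> x) \<le> \<tau>)"
  by (simp add: sfun_def supp_fun_def SUP_le_iff)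

lemma sfun_ge: "x \<in> X \<Longrightarrow> ereal (- (Amap alpha \<nu> \<bullet> x)) \<le> sfun X alpha \<nu>"
  unfolding sfun_def supp_fun_def by (rule SUP_upper2[of x]) auto

lemma sfun_not_minf: "X \<noteq> {} \<Longrightarrow> sfun X alpha \<nu> \<noteq> -\<infinity>"
  using sfun_ge by (metis MInfty_neq_ereal(1) all_not_in_conv ereal_infty_less_eq(2))

lemma sfun_scale_le: assumes "c \<ge> 0" shows "sfun X alpha (c *\<^sub>R \<nu>) \<le> ereal c * sfun X alpha \<nu>"
  unfolding sfun_def supp_fun_def
proof (rule SUP_least)
  fix x assume x: "x \<in> X"
  have "ereal (- Amap alpha (c *\<^sub>R \<nu>) \<bullet> x) = ereal c * ereal (- Amap alpha \<nu> \<bullet> x)"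
    by (simp add: Amap_scale)
  also have "\<dots> \<le> ereal c * (SUP x\<in>X. ereal (- Amap alpha \<nu> \<bullet> x))"
    by (rule ereal_mult_left_mono) (use x assms in \<open>auto intro: SUP_upper\<close>)
  finally show "ereal (- Amap alpha (c *\<^sub>R \<nu>) \<bullet> x) \<le> ereal c * (SUP x\<in>X. ereal (- Amap alpha \<nu> \<bullet> x))" .
qed

definition hfun :: "real \<Rightarrow> real" where "hfun t = exp t - 1 - t"

lemma hfun_nonneg: "hfun t \<ge> 0"
  using exp_ge_add_one_self[of t] unfolding hfun_def by linarith

lemma hfun_pos: assumes "t \<noteq> 0" shows "hfun t > 0"
proof (cases "t > 0")
  case True
  have "t * t > 0" using True by simp
  then show ?thesis using exp_lower_Taylor_quadratic[of t] True unfolding hfun_def power2_eq_square by linarith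
next
  case False
  with assms have t: "t < 0" by simp
  show ?thesis
  proof (cases "1 + t/2 \<ge> 0")
    case True
    have "(1 + t/2)^2 \<le> (exp (t/2))^2"
      using True exp_ge_add_one_self[of "t/2"] by (simp add: power_mono)
    also have "\<dots> = exp t" by (simp flip: exp_of_nat_mult)
    finally have "1 + t + t^2/4 \<le> exp t" by (simp add: power2_eq_square algebra_simps)
    moreover have "t^2 > 0" using t by simp
    ultimately show ?thesis unfolding hfun_def by linarith
  next
    case False
    then have "1 + t < 0" by simp
    then show ?thesis using exp_gt_zero[of t] unfolding hfun_def by linarith
  qed
qed

lemma Nset_neg: assumes "\<nu> \<in> Nset b" "\<nu> \<noteq> 0" shows "\<nu> $ b < 0"
proof (rule ccontr)
  assume "\<not> \<nu> $ b < 0"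
  then have nn: "\<forall>i. \<nu> $ i \<ge> 0" using assms(1) by (auto simp: Nset_def not_less)
  have "(\<Sum>i\<in>UNIV. \<nu> $ i) = 0" using assms(1) by (simp add: Nset_def)
  then have "\<forall>i\<in>UNIV. \<nu> $ i = 0" using nn by (subst (asm) sum_nonneg_eq_0_iff) auto
  then have "\<nu> = 0" by (simp add: vec_eq_iff)
  with assms show False by simp
qed

lemma Nset_sum_rest: assumes "\<nu> \<in> Nset b" shows "- \<nu> $ b = (\<Sum>i\<in>UNIV-{b}. \<nu> $ i)"
proof -
  have "(\<Sum>i\<in>UNIV. \<nu> $ i) = 0" using assms by (simp add: Nset_def)
  then show ?thesis by (simp add: sum.remove[of UNIV b])
qed

lemma Nset_le: assumes "\<nu> \<in> Nset b" "i \<noteq> b" shows "\<nu> $ i \<le> - \<nu> $ b" "0 \<le> \<nu> $ i"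
proof -
  show "0 \<le> \<nu> $ i" using assms by (simp add: Nset_def)
  have "\<nu> $ i \<le> (\<Sum>l\<in>UNIV-{b}. \<nu> $ l)"
    by (rule member_le_sum) (use assms in \<open>auto simp: Nset_def\<close>)
  then show "\<nu> $ i \<le> - \<nu> $ b" using Nset_sum_rest[OF assms(1)] by simp
qed

lemma Nset_add: "\<nu> \<in> Nset b \<Longrightarrow> \<mu> \<in> Nset b \<Longrightarrow> \<nu> + \<mu> \<in> Nset b"
  by (simp add: Nset_def sum.distrib)
lemma Nset_scale: "\<nu> \<in> Nset b \<Longrightarrow> c \<ge> 0 \<Longrightarrow> c *\<^sub>R \<nu> \<in> Nset b"
  by (simp add: Nset_def sum_distrib_left[symmetric])
lemma Nset_zero: "0 \<in> Nset b"
  by (simp add: Nset_def)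




locale cg =
  fixes X :: "(real^'n) set" and alpha :: "'m::finite \<Rightarrow> real^'n"
  assumes Xne: "X \<noteq> {}" and injA: "inj alpha"
    and indep: "\<And>c. (\<forall>x\<in>X. (\<Sum>i\<in>UNIV. c i * exp (alpha i \<bullet> x)) = 0) \<Longrightarrow> (\<forall>i. c i = 0)"
begin

definition "x0 = (SOME x. x \<in> X)"
lemma x0: "x0 \<in> X" unfolding x0_def using Xne by (simp add: some_in_eq)

lemma exists_sep: assumes "i \<noteq> k" shows "\<exists>y. y \<in> X \<and> (alpha i - alpha k) \<bullet> (y - x0) \<noteq> 0"
proof (rule ccontr)
  assume "\<not> ?thesis"
  then have h: "\<forall>y\<in>X. alpha i \<bullet> y = alpha k \<bullet> y + (alpha i - alpha k) \<bullet> x0"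
    by (auto simp: inner_diff_left inner_diff_right algebra_simps)
  define e where "e = exp ((alpha i - alpha k) \<bullet> x0)"
  define c where "c = (\<lambda>l. if l = i then 1 else if l = k then - e else (0::real))"
  have "\<forall>x\<in>X. (\<Sum>l\<in>UNIV. c l * exp (alpha l \<bullet> x)) = 0"
  proof
    fix x assume x: "x \<in> X"
    have "(\<Sum>l\<in>UNIV. c l * exp (alpha l \<bullet> x)) = (\<Sum>l\<in>{i,k}. c l * exp (alpha l \<bullet> x))"
      by (rule sum.mono_neutral_right) (auto simp: c_def)
    also have "\<dots> = exp (alpha i \<bullet> x) - e * exp (alpha k \<bullet> x)"
      using assms by (simp add: c_def)
    also have "\<dots> = 0" using h x by (simp add: e_def exp_add[symmetric] add.commute)
    finally show "(\<Sum>l\<in>UNIV. c l * exp (alpha l \<bullet> x)) = 0" .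
  qed
  from indep[OF this] have "c i = 0" by blast
  then show False by (simp add: c_def)
qed

definition "dd i k = (if i = k then x0 else (SOME y. y \<in> X \<and> (alpha i - alpha k) \<bullet> (y - x0) \<noteq> 0))"
definition "DD i k = dd i k - x0"

lemma dd_in: "dd i k \<in> X"
  using someI_ex[OF exists_sep[of i k]] x0 by (auto simp: dd_def)
lemma DD_sep: "i \<noteq> k \<Longrightarrow> (alpha i - alpha k) \<bullet> DD i k \<noteq> 0"
  using someI_ex[OF exists_sep[of i k]] by (auto simp: dd_def DD_def)

definition "Gf \<nu> = (\<Sum>j\<in>UNIV. \<Sum>l\<in>UNIV. \<nu> $ l * exp (alpha l \<bullet> DD (fst j) (snd j)))"
definition "W = (\<Sum>b\<in>UNIV. \<Sum>j\<in>UNIV. exp (alpha b \<bullet> DD (fst j) (snd j)))"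
definition "eps = 1 / (1 + W)"
definition "c0 = Min (insert 1 ((\<lambda>(i,k). exp (alpha k \<bullet> DD i k) * hfun ((alpha i - alpha k) \<bullet> DD i k)) ` {(i,k). i \<noteq> k}))"
definition "ff p = snd p + Amap alpha (fst p) \<bullet> x0 + eps * Gf (fst p)"
definition "Cs b = {p. fst p \<in> Nset b \<and> (\<forall>x\<in>X. - (Amap alpha (fst p) \<bullet> x) \<le> snd p)}"
definition "Ks b = Cs b \<inter> {p. ff p = 1}"
definition "KK = (\<Union>b. Ks b)"

lemma W_nonneg: "W \<ge> 0" unfolding W_def by (intro sum_nonneg) auto
lemma eps_pos: "eps > 0" using W_nonneg by (simp add: eps_def)
lemma c0_pos: "c0 > 0"
  unfolding c0_def
  by (subst Min_gr_iff) (auto intro!: mult_pos_pos hfun_pos DD_sep)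
lemma c0_le: "i \<noteq> k \<Longrightarrow> c0 \<le> exp (alpha k \<bullet> DD i k) * hfun ((alpha i - alpha k) \<bullet> DD i k)"
  unfolding c0_def by (rule Min_le) auto

lemma Gf_add: "Gf (x + y) = Gf x + Gf y"
  by (simp add: Gf_def sum.distrib distrib_right)
lemma Gf_scale: "Gf (c *\<^sub>R x) = c * Gf x"
  by (simp add: Gf_def sum_distrib_left mult.assoc)
lemma Gf_zero [simp]: "Gf 0 = 0"
  by (simp add: Gf_def)
lemma ff_add: "ff (p + q) = ff p + ff q"
  by (simp add: ff_def Gf_add Amap_add inner_add_left algebra_simps)
lemma ff_scale: "ff (c *\<^sub>R p) = c * ff p"
  by (simp add: ff_def Gf_scale Amap_scale algebra_simps)
lemma ff_zero_fst: "ff (0, t) = t"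
  by (simp add: ff_def)

lemma Cs_add: "p \<in> Cs b \<Longrightarrow> q \<in> Cs b \<Longrightarrow> p + q \<in> Cs b"
  unfolding Cs_def
  by (auto simp: Nset_add Amap_add inner_add_left) (smt (verit))
lemma Cs_scale: "p \<in> Cs b \<Longrightarrow> c \<ge> 0 \<Longrightarrow> c *\<^sub>R p \<in> Cs b"
  unfolding Cs_def
  by (auto simp: Nset_scale Amap_scale) (metis mult_left_mono mult_minus_right)

lemma Cs_sfun: "(\<nu>, t) \<in> Cs b \<longleftrightarrow> \<nu> \<in> Nset b \<and> sfun X alpha \<nu> \<le> ereal t"
  by (simp add: Cs_def sfun_le_iff)

end


context cg begin

lemma nu_h_nonneg: "\<nu> \<in> Nset b \<Longrightarrow> 0 \<le> \<nu> $ l * hfun (t l - t b)"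
  by (cases "l = b") (auto simp: Nset_def hfun_def intro!: mult_nonneg_nonneg hfun_nonneg[unfolded hfun_def])

lemma key_bound:
  assumes "p \<in> Cs b"
  shows "ff p \<ge> eps * c0 * (- fst p $ b)"
proof -
  obtain \<nu> \<tau> where p: "p = (\<nu>, \<tau>)" by (cases p)
  have N: "\<nu> \<in> Nset b" and cons: "\<And>x. x \<in> X \<Longrightarrow> - (Amap alpha \<nu> \<bullet> x) \<le> \<tau>"
    using assms p by (auto simp: Cs_def)
  have sum0: "(\<Sum>l\<in>UNIV. \<nu> $ l) = 0" using N by (simp add: Nset_def)
  define T where "T = \<tau> + Amap alpha \<nu> \<bullet> x0"
  have T0: "T \<ge> 0" using cons[OF x0] by (simp add: T_def)
  define a where "a j l = alpha l \<bullet> DD (fst j) (snd j)" for j l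
  define e where "e j = exp (a j b)" for j
  define H where "H j = (\<Sum>l\<in>UNIV. \<nu> $ l * hfun (a j l - a j b))" for j
  have S: "(\<Sum>l\<in>UNIV. \<nu> $ l * exp (a j l)) = e j * (Amap alpha \<nu> \<bullet> DD (fst j) (snd j)) + e j * H j" for j
  proof -
    have t: "\<nu> $ l * exp (a j l) = e j * (\<nu> $ l * a j l) + e j * (\<nu> $ l * hfun (a j l - a j b))
              + (e j * (1 - a j b)) * \<nu> $ l" for l
    proof -
      have "exp (a j l) = exp (a j b) * exp (a j l - a j b)" by (simp flip: exp_add)
      then show ?thesis by (simp add: e_def hfun_def algebra_simps)
    qed
    have "(\<Sum>l\<in>UNIV. \<nu> $ l * exp (a j l)) = e j * (\<Sum>l\<in>UNIV. \<nu> $ l * a j l) + e j * H j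
          + (e j * (1 - a j b)) * (\<Sum>l\<in>UNIV. \<nu> $ l)"
      by (simp add: t sum.distrib sum_distrib_left H_def)
    then show ?thesis by (simp add: sum0 Amap_inner a_def)
  qed
  have A: "Amap alpha \<nu> \<bullet> DD (fst j) (snd j) \<ge> - T" for j
    using cons[OF dd_in[of "fst j" "snd j"]] by (simp add: DD_def T_def inner_diff_right)
  have Hn: "H j \<ge> 0" for j
    unfolding H_def
  proof (rule sum_nonneg)
    fix l show "0 \<le> \<nu> $ l * hfun (a j l - a j b)"
      using N hfun_nonneg by (cases "l = b") (auto simp: Nset_def hfun_def)
  qed
  have e0: "e j > 0" for j by (simp add: e_def)
  have G: "Gf \<nu> = (\<Sum>j\<in>UNIV. e j * (Amap alpha \<nu> \<bullet> DD (fst j) (snd j)) + e j * H j)"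
    unfolding Gf_def using S by (simp add: a_def)
  have "Gf \<nu> \<ge> (\<Sum>j\<in>UNIV. e j * (- T) + e j * H j)"
    unfolding G
  proof (rule sum_mono)
    fix j show "e j * (- T) + e j * H j \<le> e j * (Amap alpha \<nu> \<bullet> DD (fst j) (snd j)) + e j * H j"
      using mult_left_mono[OF A[of j], of "e j"] e0[of j] by simp
  qed
  then have G2: "Gf \<nu> \<ge> - T * (\<Sum>j\<in>UNIV. e j) + (\<Sum>j\<in>UNIV. e j * H j)"
  proof -
    have "(\<Sum>j\<in>UNIV. e j * (- T) + e j * H j) = - T * (\<Sum>j\<in>UNIV. e j) + (\<Sum>j\<in>UNIV. e j * H j)"
      by (simp add: sum.distrib sum_distrib_left sum_negf mult.commute sum_subtractf)
    then show ?thesis using \<open>Gf \<nu> \<ge> _\<close> by linarith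
  qed
  have eW: "(\<Sum>j\<in>UNIV. e j) \<le> W"
    unfolding W_def e_def a_def
    by (rule member_le_sum[of b, where f = "\<lambda>b. \<Sum>j\<in>UNIV. exp (alpha b \<bullet> DD (fst j) (snd j))"])
       (auto intro: sum_nonneg)
  have epsW: "eps * W \<le> 1" using W_nonneg by (simp add: eps_def)
  have "eps * (T * (\<Sum>j\<in>UNIV. e j)) \<le> eps * (T * W)"
    using eW T0 eps_pos by (intro mult_left_mono) auto
  also have "\<dots> \<le> T" using epsW T0 by (metis mult.assoc mult.commute mult_left_le)
  finally have c1: "eps * (T * (\<Sum>j\<in>UNIV. e j)) \<le> T" .
  have ff: "ff p \<ge> eps * (\<Sum>j\<in>UNIV. e j * H j)"
  proof -
    have "ff p = T + eps * Gf \<nu>" by (simp add: ff_def p T_def)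
    also have "\<dots> \<ge> T + eps * (- T * (\<Sum>j\<in>UNIV. e j) + (\<Sum>j\<in>UNIV. e j * H j))"
      using G2 eps_pos by simp
    finally show ?thesis using c1 by (simp add: algebra_simps)
  qed
  have "(\<Sum>j\<in>UNIV. e j * H j) \<ge> (\<Sum>j\<in>(\<lambda>i. (i,b)) ` (UNIV - {b}). e j * H j)"
    by (rule sum_mono2) (use e0 Hn in \<open>auto simp: less_imp_le\<close>)
  also have "(\<Sum>j\<in>(\<lambda>i. (i,b)) ` (UNIV - {b}). e j * H j) = (\<Sum>i\<in>UNIV - {b}. e (i,b) * H (i,b))"
    by (subst sum.reindex) (auto simp: inj_on_def)
  also have "\<dots> \<ge> (\<Sum>i\<in>UNIV - {b}. c0 * \<nu> $ i)"
  proof (rule sum_mono)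
    fix i assume i: "i \<in> UNIV - {b}"
    have "H (i,b) \<ge> \<nu> $ i * hfun (a (i,b) i - a (i,b) b)"
      unfolding H_def
      by (rule member_le_sum[where f = "\<lambda>l. \<nu> $ l * hfun (a (i,b) l - a (i,b) b)"])
         (use nu_h_nonneg[OF N, of _ "a (i,b)"] in auto)
    then have "e (i,b) * H (i,b) \<ge> e (i,b) * (\<nu> $ i * hfun (a (i,b) i - a (i,b) b))"
      using e0[of "(i,b)"] by (intro mult_left_mono) auto
    moreover have "c0 \<le> e (i,b) * hfun (a (i,b) i - a (i,b) b)"
      using c0_le[of i b] i by (simp add: e_def a_def inner_diff_left)
    moreover have "\<nu> $ i \<ge> 0" using N i by (simp add: Nset_def)
    ultimately show "c0 * \<nu> $ i \<le> e (i,b) * H (i,b)"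
      by (smt (verit, best) mult.commute mult.left_commute mult_right_mono)
  qed
  also have "(\<Sum>i\<in>UNIV - {b}. c0 * \<nu> $ i) = c0 * (- \<nu> $ b)"
    by (simp add: sum_distrib_left[symmetric] Nset_sum_rest[OF N])
  finally have "(\<Sum>j\<in>UNIV. e j * H j) \<ge> c0 * (- \<nu> $ b)" .
  then have "eps * (\<Sum>j\<in>UNIV. e j * H j) \<ge> eps * (c0 * (- \<nu> $ b))"
    using eps_pos by (intro mult_left_mono) auto
  then show ?thesis using ff p by simp
qed

end


context cg begin

lemma ff_pos: assumes "p \<in> Cs b" "p \<noteq> 0" shows "ff p > 0"
proof (cases "fst p = 0")
  case True
  then obtain t where p: "p = (0, t)" by (cases p) auto
  with assms have "t \<noteq> 0" by (auto simp: zero_prod_def)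
  moreover have "t \<ge> 0" using assms(1) x0 p by (auto simp: Cs_def)
  ultimately show ?thesis using p by (simp add: ff_zero_fst)
next
  case False
  have "fst p \<in> Nset b" using assms by (simp add: Cs_def)
  from Nset_neg[OF this False] have "- fst p $ b > 0" by simp
  then have "eps * c0 * (- fst p $ b) > 0" using eps_pos c0_pos by (metis mult_pos_pos)
  with key_bound[OF assms(1)] show ?thesis by linarith
qed

lemma cont_Amap: "continuous_on S (\<lambda>p. Amap alpha (f p)) " if "continuous_on S f"
  unfolding Amap_def by (intro continuous_intros that)

lemma cont_ff: "continuous_on UNIV ff"
  unfolding ff_def Gf_def Amap_def by (intro continuous_intros)

lemma cont_L: "continuous_on UNIV (\<lambda>\<nu>. (\<nu>, 1 - (Amap alpha \<nu> \<bullet> x0 + eps * Gf \<nu>)))"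
  unfolding Gf_def Amap_def by (intro continuous_intros)

lemma closed_Cs: "closed (Cs b)"
proof -
  have "Cs b = (\<Inter>i\<in>-{b}. {p. 0 \<le> fst p $ i}) \<inter> {p. (\<Sum>i\<in>UNIV. fst p $ i) = 0}
        \<inter> (\<Inter>x\<in>X. {p. - (Amap alpha (fst p) \<bullet> x) \<le> snd p})"
    by (auto simp: Cs_def Nset_def)
  moreover have "closed \<dots>"
    unfolding Amap_def
    by (intro closed_Int closed_INT ballI closed_Collect_le closed_Collect_eq continuous_intros)
  ultimately show ?thesis by simp
qed

lemma closed_Ks: "closed (Ks b)"
  unfolding Ks_def
  by (intro closed_Int closed_Cs closed_Collect_eq cont_ff continuous_intros)

lemma convex_Ks: "convex (Ks b)"
  unfolding convex_def Ks_def
  by (auto intro!: Cs_add Cs_scale simp: ff_add ff_scale)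

lemma Ks_sub: "Ks b \<subseteq> (\<lambda>\<nu>. (\<nu>, 1 - (Amap alpha \<nu> \<bullet> x0 + eps * Gf \<nu>))) ` cbox (- (\<chi> i. 1/(eps*c0))) (\<chi> i. 1/(eps*c0))"
proof
  fix p assume p: "p \<in> Ks b"
  then have C: "p \<in> Cs b" and f1: "ff p = 1" by (auto simp: Ks_def)
  obtain \<nu> \<tau> where pe: "p = (\<nu>, \<tau>)" by (cases p)
  have N: "\<nu> \<in> Nset b" using C pe by (simp add: Cs_def)
  have ec: "eps * c0 > 0" using eps_pos c0_pos by simp
  have "eps * c0 * (- \<nu> $ b) \<le> 1" using key_bound[OF C] f1 pe by simp
  then have nb: "- \<nu> $ b \<le> 1/(eps*c0)" using ec by (simp add: field_simps mult.commute)
  have "- \<nu> $ b \<ge> 0" using Nset_sum_rest[OF N] N by (auto simp: Nset_def intro: sum_nonneg)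
  then have bx: "\<bar>\<nu> $ i\<bar> \<le> 1/(eps*c0)" for i
    using Nset_le[OF N, of i] nb by (cases "i = b") auto
  have "\<tau> = 1 - (Amap alpha \<nu> \<bullet> x0 + eps * Gf \<nu>)" using f1 pe by (simp add: ff_def)
  moreover have "\<nu> \<in> cbox (- (\<chi> i. 1/(eps*c0))) (\<chi> i. 1/(eps*c0))"
    using bx by (auto simp: mem_box_cart abs_le_iff minus_le_iff)
  ultimately show "p \<in> (\<lambda>\<nu>. (\<nu>, 1 - (Amap alpha \<nu> \<bullet> x0 + eps * Gf \<nu>))) ` cbox (- (\<chi> i. 1/(eps*c0))) (\<chi> i. 1/(eps*c0))"
    using pe by auto
qed

lemma compact_KK: "compact KK"
proof -
  have "closed KK" unfolding KK_def by (rule closed_UN) (auto intro: closed_Ks)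
  moreover have "bounded KK"
  proof -
    have "compact ((\<lambda>\<nu>. (\<nu>, 1 - (Amap alpha \<nu> \<bullet> x0 + eps * Gf \<nu>))) ` cbox (- (\<chi> i. 1/(eps*c0))) (\<chi> i. 1/(eps*c0)))"
      by (intro compact_continuous_image continuous_on_subset[OF cont_L]) auto
    then show ?thesis unfolding KK_def using Ks_sub
      by (meson UN_least bounded_subset compact_imp_bounded)
  qed
  ultimately show ?thesis by (simp add: compact_eq_bounded_closed)
qed

lemma compact_Ks: "compact (Ks b)"
  using compact_KK closed_Ks unfolding KK_def
  by (meson UNIV_I UN_upper closed_subset compact_Int_closed compact_imp_closed bounded_subset compact_eq_bounded_closed compact_imp_bounded)

lemma not_extreme:
  assumes "e \<in> Ks b" "a \<in> Cs b" "c \<in> Cs b" "ff a > 0" "ff c > 0" "e = a + c"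
    "(1 / ff a) *\<^sub>R a \<noteq> (1 / ff c) *\<^sub>R c"
  shows "\<not> e extreme_point_of Ks b"
proof
  assume ex: "e extreme_point_of Ks b"
  define q1 where "q1 = (1 / ff a) *\<^sub>R a"
  define q2 where "q2 = (1 / ff c) *\<^sub>R c"
  have q1: "q1 \<in> Ks b" using assms by (auto simp: Ks_def q1_def ff_scale intro!: Cs_scale)
  have q2: "q2 \<in> Ks b" using assms by (auto simp: Ks_def q2_def ff_scale intro!: Cs_scale)
  have sum1: "ff a + ff c = 1" using assms by (simp add: Ks_def ff_add)
  have "1 - ff c = ff a" using sum1 by simp
  then have "e = (1 - ff c) *\<^sub>R q1 + ff c *\<^sub>R q2"
    using assms by (simp add: q1_def q2_def)
  then have "e \<in> open_segment q1 q2"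
    unfolding in_segment using assms sum1 by (auto simp: q1_def q2_def)
  then show False using ex q1 q2 by (auto simp: extreme_point_of_def)
qed

end


context cg begin

abbreviation "GG \<equiv> circuit_graph X alpha"

lemma G_cc: "convex_cone GG"
  unfolding circuit_graph_def by (rule convex_cone_convex_cone_hull)
lemma G_conic: "conic GG"
  unfolding circuit_graph_def by (rule conic_convex_cone_hull)
lemma G_convex: "convex GG"
  unfolding circuit_graph_def by (rule convex_convex_cone_hull)

lemma sfun_fin: assumes "sfun X alpha \<nu> < \<infinity>" shows "sfun X alpha \<nu> = ereal (real_of_ereal (sfun X alpha \<nu>))"
  using assms sfun_not_minf[OF Xne, of alpha \<nu>] by (cases "sfun X alpha \<nu>") auto

lemma extreme_in_G:
  assumes ex: "e extreme_point_of Ks b" shows "e \<in> GG"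
proof -
  have eK: "e \<in> Ks b" using ex by (simp add: extreme_point_of_def)
  obtain \<nu> \<tau> where ee: "e = (\<nu>, \<tau>)" by (cases e)
  have C: "(\<nu>, \<tau>) \<in> Cs b" and f1: "ff (\<nu>, \<tau>) = 1" using eK ee by (auto simp: Ks_def)
  have N: "\<nu> \<in> Nset b" and sl: "sfun X alpha \<nu> \<le> ereal \<tau>" using C by (auto simp: Cs_sfun)
  show ?thesis
  proof (cases "\<nu> = 0")
    case True
    then have "\<tau> = 1" using f1 by (simp add: ff_zero_fst)
    then have "e = (0, 1)" using True ee by simp
    then show ?thesis unfolding circuit_graph_def by (intro hull_inc) auto
  next
    case nz: False
    define \<sigma> where "\<sigma> = real_of_ereal (sfun X alpha \<nu>)"
    have s\<sigma>: "sfun X alpha \<nu> = ereal \<sigma>" unfolding \<sigma>_def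
      by (rule sfun_fin) (use sl in auto)
    have "\<sigma> \<le> \<tau>" using sl s\<sigma> by simp
    have \<tau>\<sigma>: "\<tau> = \<sigma>"
    proof (rule ccontr)
      assume "\<tau> \<noteq> \<sigma>"
      with \<open>\<sigma> \<le> \<tau>\<close> have lt: "\<sigma> < \<tau>" by simp
      define a where "a = (\<nu>, \<sigma>)"
      define c where "c = ((0::real^'m), \<tau> - \<sigma>)"
      have aC: "a \<in> Cs b" unfolding a_def using N s\<sigma> by (simp add: Cs_sfun)
      have cC: "c \<in> Cs b" unfolding c_def using lt by (simp add: Cs_sfun Nset_zero sfun_le_iff)
      have a0: "a \<noteq> 0" using nz by (simp add: a_def zero_prod_def)
      have fa: "ff a > 0" by (rule ff_pos[OF aC a0])
      have fc: "ff c > 0" using lt by (simp add: c_def ff_zero_fst)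
      have "(1 / ff a) *\<^sub>R a \<noteq> (1 / ff c) *\<^sub>R c"
        using nz fa by (auto simp: a_def c_def)
      moreover have "e = a + c" by (simp add: ee a_def c_def)
      ultimately show False using not_extreme[OF eK aC cC fa fc] ex by blast
    qed
    define m where "m = - \<nu> $ b"
    have m0: "m > 0" using Nset_neg[OF N nz] by (simp add: m_def)
    define l where "l = (1/m) *\<^sub>R \<nu>"
    have \<nu>l: "\<nu> = m *\<^sub>R l" using m0 by (simp add: l_def)
    have lb: "l $ b = -1" using m0 by (simp add: l_def m_def)
    have le1: "sfun X alpha l \<le> ereal (\<sigma>/m)"
      using sfun_scale_le[of "1/m" X alpha \<nu>] m0 s\<sigma> by (simp add: l_def)
    have le2: "ereal \<sigma> \<le> ereal m * sfun X alpha l"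
      using sfun_scale_le[of m X alpha l] m0 s\<sigma> \<nu>l by simp
    have sl_eq: "sfun X alpha l = ereal (\<sigma>/m)"
    proof (cases "sfun X alpha l")
      case (real r)
      then have "\<sigma> \<le> m * r" "r \<le> \<sigma>/m" using le1 le2 by auto
      then have "r = \<sigma>/m" using m0 by (simp add: field_simps)
      then show ?thesis using real by simp
    next
      case PInf then show ?thesis using le1 by simp
    next
      case MInf then show ?thesis using sfun_not_minf[OF Xne, of alpha l] by simp
    qed
    have lN: "l \<in> Nset b" using N m0 by (simp add: l_def Nset_scale)
    have l0: "l \<noteq> 0" using nz m0 by (simp add: l_def)
    have circ: "is_X_circuit X alpha b l"
      unfolding is_X_circuit_def
    proof (intro conjI lN l0)
      show "sfun X alpha l < \<infinity>" using sl_eq by simp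
      show "\<not> (\<exists>\<nu>1 \<nu>2 t. \<nu>1 \<in> Nset b \<and> \<nu>2 \<in> Nset b \<and> \<not> proportional \<nu>1 \<nu>2 \<and>
           t \<in> {0<..<1::real} \<and> l = (1 - t) *\<^sub>R \<nu>1 + t *\<^sub>R \<nu>2 \<and> affine_on_seg X alpha \<nu>1 \<nu>2)"
      proof
        assume "\<exists>\<nu>1 \<nu>2 t. \<nu>1 \<in> Nset b \<and> \<nu>2 \<in> Nset b \<and> \<not> proportional \<nu>1 \<nu>2 \<and>
           t \<in> {0<..<1::real} \<and> l = (1 - t) *\<^sub>R \<nu>1 + t *\<^sub>R \<nu>2 \<and> affine_on_seg X alpha \<nu>1 \<nu>2"
        then obtain \<nu>1 \<nu>2 t where N1: "\<nu>1 \<in> Nset b" and N2: "\<nu>2 \<in> Nset b"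
          and np: "\<not> proportional \<nu>1 \<nu>2" and t: "0 < t" "t < 1"
          and lt: "l = (1 - t) *\<^sub>R \<nu>1 + t *\<^sub>R \<nu>2" and aff: "affine_on_seg X alpha \<nu>1 \<nu>2"
          by auto
        define s1 where "s1 = real_of_ereal (sfun X alpha \<nu>1)"
        define s2 where "s2 = real_of_ereal (sfun X alpha \<nu>2)"
        have e1: "sfun X alpha \<nu>1 = ereal s1" unfolding s1_def
          by (rule sfun_fin) (use aff in \<open>simp add: affine_on_seg_def\<close>)
        have e2: "sfun X alpha \<nu>2 = ereal s2" unfolding s2_def
          by (rule sfun_fin) (use aff in \<open>simp add: affine_on_seg_def\<close>)
        have "sfun X alpha l = ereal ((1 - t) * s1 + t * s2)"
          using aff t lt by (auto simp: affine_on_seg_def s1_def s2_def)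
        with sl_eq have sv: "\<sigma>/m = (1 - t) * s1 + t * s2" by simp
        have p1: "(\<nu>1, s1) \<in> Cs b" using N1 e1 by (simp add: Cs_sfun)
        have p2: "(\<nu>2, s2) \<in> Cs b" using N2 e2 by (simp add: Cs_sfun)
        have n1: "\<nu>1 \<noteq> 0" using np by (auto simp: proportional_def)
        have n2: "\<nu>2 \<noteq> 0" using np by (auto simp: proportional_def)
        define a where "a = (m * (1 - t)) *\<^sub>R (\<nu>1, s1)"
        define c where "c = (m * t) *\<^sub>R (\<nu>2, s2)"
        have k1: "m * (1 - t) > 0" and k2: "m * t > 0" using m0 t by auto
        have aC: "a \<in> Cs b" unfolding a_def using p1 k1 by (intro Cs_scale) auto
        have cC: "c \<in> Cs b" unfolding c_def using p2 k2 by (intro Cs_scale) auto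
        have f1p: "ff (\<nu>1, s1) > 0" by (rule ff_pos[OF p1]) (use n1 in \<open>simp add: zero_prod_def\<close>)
        have f2p: "ff (\<nu>2, s2) > 0" by (rule ff_pos[OF p2]) (use n2 in \<open>simp add: zero_prod_def\<close>)
        have fa: "ff a > 0" unfolding a_def ff_scale using k1 f1p by (rule mult_pos_pos)
        have fc: "ff c > 0" unfolding c_def ff_scale using k2 f2p by (rule mult_pos_pos)
        have "e = a + c"
        proof -
          have "fst (a + c) = m *\<^sub>R l" by (simp add: a_def c_def lt algebra_simps)
          moreover have "snd (a + c) = m * (\<sigma>/m)" by (simp add: a_def c_def sv algebra_simps)
          ultimately show ?thesis using ee \<nu>l \<tau>\<sigma> m0 by (simp add: prod_eq_iff)
        qed
        moreover have "(1 / ff a) *\<^sub>R a \<noteq> (1 / ff c) *\<^sub>R c"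
        proof
          assume "(1 / ff a) *\<^sub>R a = (1 / ff c) *\<^sub>R c"
          then have "fst ((1 / ff a) *\<^sub>R a) = fst ((1 / ff c) *\<^sub>R c)" by simp
          then have eq: "(m * (1 - t) / ff a) *\<^sub>R \<nu>1 = (m * t / ff c) *\<^sub>R \<nu>2"
            by (simp add: a_def c_def)
          have "m * (1 - t) / ff a \<noteq> 0" using k1 fa m0 t by simp
          define k1' where "k1' = m * (1 - t) / ff a"
          define k2' where "k2' = m * t / ff c"
          have k1'0: "k1' \<noteq> 0" using \<open>m * (1 - t) / ff a \<noteq> 0\<close> by (simp add: k1'_def)
          have "(1/k1') *\<^sub>R (k1' *\<^sub>R \<nu>1) = (1/k1') *\<^sub>R (k2' *\<^sub>R \<nu>2)"
            using eq by (simp add: k1'_def k2'_def)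
          then have "\<nu>1 = (k2' / k1') *\<^sub>R \<nu>2" using k1'0 by simp
          then show False using np by (auto simp: proportional_def)
        qed
        ultimately show False using not_extreme[OF eK aC cC fa fc] ex by blast
      qed
    qed
    have lL: "l \<in> Lambda X alpha" using circ lb by (auto simp: Lambda_def)
    have "funform X alpha l \<in> GG" unfolding circuit_graph_def by (intro hull_inc) (use lL in auto)
    moreover have "e = m *\<^sub>R funform X alpha l"
      using ee \<nu>l \<tau>\<sigma> sl_eq m0 by (simp add: funform_def)
    ultimately show ?thesis using G_conic m0 by (simp add: conic_mul)
  qed
qed

end


context cg begin

lemma KK_in_G: "KK \<subseteq> GG"
proof
  fix p assume "p \<in> KK"
  then obtain b where p: "p \<in> Ks b" by (auto simp: KK_def)
  have "Ks b = convex hull {x. x extreme_point_of Ks b}"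
    by (rule Krein_Milman_Minkowski[OF compact_Ks convex_Ks])
  also have "\<dots> \<subseteq> GG"
    by (rule hull_minimal) (use extreme_in_G G_convex in auto)
  finally show "p \<in> GG" using p by blast
qed

lemma one_in_KK: "((0::real^'m), 1::real) \<in> KK"
proof -
  have "((0::real^'m), 1::real) \<in> Ks undefined"
    by (simp add: Ks_def Cs_def Nset_zero ff_zero_fst)
  then show ?thesis by (auto simp: KK_def)
qed

lemma G_eq: "GG = convex_cone hull KK"
proof
  show "GG \<subseteq> convex_cone hull KK"
    unfolding circuit_graph_def
  proof (rule hull_minimal)
    show "convex_cone (convex_cone hull KK)" by (rule convex_cone_convex_cone_hull)
    show "funform X alpha ` Lambda X alpha \<union> {(0, 1)} \<subseteq> convex_cone hull KK"
    proof
      fix p assume "p \<in> funform X alpha ` Lambda X alpha \<union> {(0, 1)}"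
      then consider "p = (0,1)" | l where "l \<in> Lambda X alpha" "p = funform X alpha l" by blast
      then show "p \<in> convex_cone hull KK"
      proof cases
        case 1 then show ?thesis using one_in_KK by (simp add: hull_inc)
      next
        case 2
        then obtain b where c: "is_X_circuit X alpha b l" by (auto simp: Lambda_def)
        have N: "l \<in> Nset b" and l0: "l \<noteq> 0" and fin: "sfun X alpha l < \<infinity>"
          using c by (auto simp: is_X_circuit_def)
        have pC: "p \<in> Cs b" using 2 N sfun_fin[OF fin] by (simp add: funform_def Cs_sfun)
        have p0: "p \<noteq> 0" using 2 l0 by (simp add: funform_def zero_prod_def)
        have fp: "ff p > 0" by (rule ff_pos[OF pC p0])
        define q where "q = (1 / ff p) *\<^sub>R p"
        have "q \<in> Ks b" using pC fp by (auto simp: q_def Ks_def ff_scale intro!: Cs_scale)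
        then have "q \<in> convex_cone hull KK" by (auto simp: KK_def intro!: hull_inc)
        moreover have "p = ff p *\<^sub>R q" using fp by (simp add: q_def)
        ultimately show ?thesis using conic_convex_cone_hull fp by (metis conic_mul less_imp_le)
      qed
    qed
  qed
  show "convex_cone hull KK \<subseteq> GG"
    using hull_minimal[of KK GG convex_cone] KK_in_G G_cc by blast
qed

lemma closed_G: "closed GG"
proof -
  have ne: "KK \<noteq> {}" using one_in_KK by auto
  have eq: "GG = conic hull (convex hull KK)"
    using G_eq convex_cone_hull_separate_nonempty[OF ne] by simp
  have sub: "convex hull KK \<subseteq> {p. ff p = 1}"
  proof (rule hull_minimal)
    show "KK \<subseteq> {p. ff p = 1}" by (auto simp: KK_def Ks_def)
    show "convex {p. ff p = 1}" unfolding convex_def by (auto simp: ff_add ff_scale)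
  qed
  have "ff 0 = 0" using ff_scale[of 0 0] by simp
  then have "0 \<notin> convex hull KK" using sub by auto
  moreover have "compact (convex hull KK)" by (rule compact_convex_hull[OF compact_KK])
  ultimately show ?thesis unfolding eq by (intro closed_conic_hull) auto
qed

end

theorem lemma5p11:
  fixes X :: "(real^'n) set" and alpha :: "'m::finite \<Rightarrow> real^'n"
  assumes "X \<noteq> {}" and "closed X" and "convex X"
    and "inj alpha"
    and "\<And>c. (\<forall>x\<in>X. (\<Sum>i\<in>UNIV. c i * exp (alpha i \<bullet> x)) = 0) \<Longrightarrow> (\<forall>i. c i = 0)"
  shows "closed (circuit_graph X alpha)"
proof -
  interpret cg X alpha using assms by unfold_locales auto
  show ?thesis by (rule closed_G)
qed


end
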